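(* Let $\mathcal A$ be a finite set, $\pi^{\mathrm{ref}}\in\Delta(\mathcal A)$ with full support, $\eta>0$, and let $Q^{(1)},Q^{(2)},\dots\in\mathbb R^{\mathcal A}$ satisfy $\|Q^{(t)}\|_\infty\le1$. Set $f^{(t)}(\pi)=\langle\pi,Q^{(t)}\rangle-\eta^{-1}\mathrm{KL}(\pi\|\pi^{\mathrm{ref}})$. Define $\pi^{(1)}=\pi^{\mathrm{ref}}$ and, for $t\ge1$, $$\pi^{(t+1)}(a)\propto\big(\pi^{\mathrm{ref}}(a)\big)^{1/t}\big(\pi^{(t)}(a)\big)^{(t-1)/t}\exp\!\big(\tfrac{\eta}{t}Q^{(t)}(a)\big).$$ Then for every $T\ge1$, $$\max_{\pi\in\Delta(\mathcal A)}\frac1T\sum_{t=1}^Tf^{(t)}(\pi)-\frac1T\sum_{t=1}^Tf^{(t)}(\pi^{(t)})\le\mathcal O\!\left(\frac{\eta(1+\log T)}{T}\right).$$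
   Context: $\mathrm{KL}(p\|q)=\sum_a p(a)\log(p(a)/q(a))$; $\langle\cdot,\cdot\rangle$ is the standard inner product on $\mathbb R^{\mathcal A}$; $\mathcal O$ hides an absolute constant. *)

theory Defs
  imports Complex_Main
begin

definition simplex :: "'a set \<Rightarrow> ('a \<Rightarrow> real) set" where
  "simplex A = {p. (\<forall>a\<in>A. 0 \<le> p a) \<and> (\<Sum>a\<in>A. p a) = 1}"

text \<open>KL divergence, with the convention 0 log 0 = 0 (automatic, since 0 * x = 0).\<close>
definition KL :: "'a set \<Rightarrow> ('a \<Rightarrow> real) \<Rightarrow> ('a \<Rightarrow> real) \<Rightarrow> real" where
  "KL A p q = (\<Sum>a\<in>A. p a * ln (p a / q a))"

definition inner_A :: "'a set \<Rightarrow> ('a \<Rightarrow> real) \<Rightarrow> ('a \<Rightarrow> real) \<Rightarrow> real" where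
  "inner_A A p v = (\<Sum>a\<in>A. p a * v a)"

definition obj :: "'a set \<Rightarrow> ('a \<Rightarrow> real) \<Rightarrow> real \<Rightarrow> ('a \<Rightarrow> real) \<Rightarrow> ('a \<Rightarrow> real) \<Rightarrow> real" where
  "obj A piref eta Qt p = inner_A A p Qt - KL A p piref / eta"

definition normalize :: "'a set \<Rightarrow> ('a \<Rightarrow> real) \<Rightarrow> ('a \<Rightarrow> real)" where
  "normalize A w = (\<lambda>a. w a / (\<Sum>b\<in>A. w b))"

text \<open>Iterates: pol (Suc 0) = pi_ref, and for t \<ge> 1,
  pol (t+1) a \<propto> piref a ^ (1/t) * pol t a ^ ((t-1)/t) * exp (eta/t * Q t a).
  Index 0 is unused.\<close>
primrec pol :: "'a set \<Rightarrow> ('a \<Rightarrow> real) \<Rightarrow> real \<Rightarrow> (nat \<Rightarrow> 'a \<Rightarrow> real) \<Rightarrow> nat \<Rightarrow> 'a \<Rightarrow> real" where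
  "pol A piref eta Q 0 = piref"
| "pol A piref eta Q (Suc t) =
     (if t = 0 then piref
      else normalize A (\<lambda>a. piref a powr (1 / real t)
                             * pol A piref eta Q t a powr ((real t - 1) / real t)
                             * exp (eta / real t * Q t a)))"

end

theory Submission imports Defs "HOL-Analysis.Convex" begin

lemma hoeff_aux:
  fixes h p :: real
  assumes h: "h \<ge> 0" and p: "p \<ge> 0"
  shows "- h * p + ln (1 + p * (exp h - 1)) \<le> h^2 / 8"
proof (cases "h = 0")
  case True then show ?thesis by simp
next
  case False
  then have h0: "h > 0" using h by simp
  define D where "D = (\<lambda>x::real. 1 + p * (exp x - 1))"
  have Dpos: "D x > 0" if "x \<ge> 0" for x
    using p that unfolding D_def by (intro add_pos_nonneg mult_nonneg_nonneg) auto
  define f0 where "f0 = (\<lambda>x. - x * p + ln (D x))"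
  define f1 where "f1 = (\<lambda>x. - p + p * exp x / D x)"
  define f2 where "f2 = (\<lambda>x. p * exp x / D x - (p * exp x / D x)^2)"
  define df where "df = (\<lambda>n::nat. if n = 0 then f0 else if n = 1 then f1 else f2)"
  have d1: "(f0 has_real_derivative f1 x) (at x)" if "x \<ge> 0" for x
  proof -
    have "D x > 0" using Dpos that .
    then show ?thesis unfolding f0_def f1_def D_def
      by (auto intro!: derivative_eq_intros simp: field_simps)
  qed
  have d2: "(f1 has_real_derivative f2 x) (at x)" if "x \<ge> 0" for x
  proof -
    have Dx: "D x > 0" using Dpos that .
    have "(f1 has_real_derivative (p * exp x * D x - p * exp x * (p * exp x)) / (D x)^2) (at x)"
      unfolding f1_def D_def using Dx[unfolded D_def]
      by (auto intro!: derivative_eq_intros simp: power2_eq_square)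
    moreover have "(p * exp x * D x - p * exp x * (p * exp x)) / (D x)^2 = f2 x"
      using Dx by (simp add: f2_def field_simps power2_eq_square)
    ultimately show ?thesis by simp
  qed
  have diff: "\<forall>m t. m < 2 \<and> 0 \<le> t \<and> t \<le> h \<longrightarrow> (df m has_real_derivative df (Suc m) t) (at t)"
    using d1 d2 by (auto simp: df_def less_2_cases_iff)
  obtain t where t: "0 < t" "t < h"
    and eq: "f0 h = (\<Sum>m<2. (df m 0 / fact m) * (h - 0)^m) + (df 2 t / fact 2) * (h - 0)^2"
    using Taylor[of 2 df f0 0 h 0 h, OF _ _ diff] h0 by (auto simp: df_def)
  have "(\<Sum>m<2. (df m 0 / fact m) * (h - 0)^m) = 0"
    by (simp add: df_def f0_def f1_def D_def lessThan_nat_numeral)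
  then have eq2: "f0 h = f2 t * h^2 / 2" using eq by (simp add: df_def)
  have "f2 t \<le> 1 / 4"
  proof -
    have q: "u - u^2 \<le> 1 / 4" for u :: real
      using sum_squares_ge_zero[of "u - 1/2" 0] by (simp add: power2_eq_square algebra_simps)
    show ?thesis unfolding f2_def by (rule q)
  qed
  then have "f2 t * h^2 / 2 \<le> (1/4) * h^2 / 2"
    by (intro divide_right_mono mult_right_mono) auto
  then show ?thesis using eq2 by (simp add: f0_def D_def)
qed



lemma exp_chord:
  fixes lo hi x :: real
  assumes "lo < hi" "lo \<le> x" "x \<le> hi"
  shows "exp x \<le> ((hi - x) * exp lo + (x - lo) * exp hi) / (hi - lo)"
proof -
  define u where "u = (x - lo) / (hi - lo)"
  have u: "0 \<le> u" "u \<le> 1" using assms by (auto simp: u_def divide_simps)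
  have ud: "u * (hi - lo) = x - lo" using assms by (simp add: u_def)
  have x: "x = (1 - u) * lo + u * hi" using ud by (simp add: algebra_simps)
  have "exp x \<le> (1 - u) * exp lo + u * exp hi"
    unfolding x using convex_onD[OF exp_convex, of u lo hi] u by simp
  also have "\<dots> = ((hi - x) * exp lo + (x - lo) * exp hi) / (hi - lo)"
  proof -
    have hl: "hi - lo \<noteq> 0" using assms by simp
    have "1 - u = (hi - x) / (hi - lo)" using hl by (simp add: u_def field_simps)
    then show ?thesis by (simp add: u_def add_divide_distrib)
  qed
  finally show ?thesis .
qed

lemma hoeff_fin:
  fixes w x :: "'a \<Rightarrow> real" and lo hi :: real
  assumes A: "finite A" and w0: "\<forall>a\<in>A. 0 \<le> w a" and w1: "sum w A = 1"
    and xb: "\<forall>a\<in>A. lo \<le> x a \<and> x a \<le> hi" and lohi: "lo < hi"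
  shows "(\<Sum>a\<in>A. w a * exp (x a)) \<le> exp ((\<Sum>a\<in>A. w a * x a) + (hi - lo)^2 / 8)"
proof -
  define h where "h = hi - lo"
  define \<mu> where "\<mu> = (\<Sum>a\<in>A. w a * x a)"
  define p where "p = (\<mu> - lo) / h"
  have h0: "h > 0" using lohi by (simp add: h_def)
  have mulo: "\<mu> \<ge> lo"
  proof -
    have "(\<Sum>a\<in>A. w a * lo) \<le> \<mu>" unfolding \<mu>_def
      by (intro sum_mono) (use w0 xb in \<open>auto intro: mult_left_mono\<close>)
    then show ?thesis by (simp add: sum_distrib_right[symmetric] w1)
  qed
  have p0: "p \<ge> 0" using mulo h0 by (simp add: p_def)
  have "(\<Sum>a\<in>A. w a * exp (x a)) \<le> (\<Sum>a\<in>A. w a * (((hi - x a) * exp lo + (x a - lo) * exp hi) / (hi - lo)))"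
    by (intro sum_mono mult_left_mono exp_chord) (use w0 xb lohi in auto)
  also have "\<dots> = ((hi * (\<Sum>a\<in>A. w a) - \<mu>) * exp lo + (\<mu> - lo * (\<Sum>a\<in>A. w a)) * exp hi) / (hi - lo)"
    unfolding \<mu>_def
    by (simp add: sum_divide_distrib[symmetric] sum_distrib_left sum_distrib_right
          sum_subtractf sum.distrib algebra_simps)
  also have "\<dots> = exp lo * (1 + p * (exp h - 1))"
    using h0 by (simp add: w1 p_def h_def field_simps exp_diff)
  also have "1 + p * (exp h - 1) \<le> exp (h * p + h^2 / 8)"
  proof -
    have pos: "1 + p * (exp h - 1) > 0" using p0 h0
      by (intro add_pos_nonneg mult_nonneg_nonneg) auto
    have "-h * p + ln (1 + p * (exp h - 1)) \<le> h^2 / 8"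
      using hoeff_aux[of h p] h0 p0 by simp
    then have "ln (1 + p * (exp h - 1)) \<le> h * p + h^2 / 8" by simp
    then show ?thesis using pos by (metis exp_le_cancel_iff exp_ln)
  qed
  then have "exp lo * (1 + p * (exp h - 1)) \<le> exp lo * exp (h * p + h^2 / 8)" by simp
  also have "\<dots> = exp (\<mu> + (hi - lo)^2 / 8)"
    using h0 by (simp add: p_def h_def exp_add[symmetric])
  finally show ?thesis unfolding \<mu>_def .
qed


lemma harm_bound: "(\<Sum>t=1..T. 1 / real t) \<le> 1 + ln (real T)" if "1 \<le> T" for T :: nat
  using that
proof (induction T rule: dec_induct)
  case base then show ?case by simp
next
  case (step n)
  have n: "real n \<ge> 1" using step by simp
  have "ln (real n / real (Suc n)) \<le> real n / real (Suc n) - 1"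
    by (rule ln_le_minus_one) (use n in simp)
  also have "\<dots> = - 1 / real (Suc n)" by (simp add: field_simps)
  finally have "1 / real (Suc n) \<le> ln (real (Suc n)) - ln (real n)"
    using n by (simp add: ln_div)
  then show ?case using step by simp
qed

lemma exp_arith:
  fixes N t x y z e q :: real
  assumes nn: "N = t + 1" and N: "N > 0"
  shows "x / N + (t / N) * (x + y - z) + e / N * q = - (t / N) * z + x + (t * y + e * q) / N"
proof -
  have "x / N + t / N * x = (t + 1) * x / N" using N by (simp add: field_simps)
  also have "\<dots> = x" using N nn by simp
  finally have e1: "x / N + t / N * x = x" .
  have "x / N + (t / N) * (x + y - z) + e / N * q = (x / N + t / N * x) + (t * y + e * q) / N - (t / N) * z"
    using N by (simp add: field_simps)
  also have "\<dots> = - (t / N) * z + x + (t * y + e * q) / N" unfolding e1 by simp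
  finally show ?thesis .
qed

locale rg =
  fixes A :: "'a set" and r :: "'a \<Rightarrow> real" and eta :: real and Q :: "nat \<Rightarrow> 'a \<Rightarrow> real"
  assumes fin: "finite A" and rs: "r \<in> Defs.simplex A" and rpos: "\<forall>a\<in>A. 0 < r a"
    and eta: "0 < eta" and Qb: "\<forall>t\<ge>1. \<forall>a\<in>A. \<bar>Q t a\<bar> \<le> 1"
begin

definition Z where "Z v = (\<Sum>a\<in>A. r a * exp (eta * v a))"
definition Phi where "Phi v = ln (Z v) / eta"
definition gibbs where "gibbs v = (\<lambda>a. r a * exp (eta * v a) / Z v)"
definition S where "S t = (\<lambda>a. \<Sum>s=1..t. Q s a)"
definition m where "m t = (\<lambda>a. S t a / real t)"

lemma rsum: "sum r A = 1" using rs by (simp add: simplex_def)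

lemma Ane: "A \<noteq> {}" using rsum by auto

lemma Zpos: "Z v > 0"
  unfolding Z_def using fin Ane rpos by (intro sum_pos) auto

lemma gibbs_pos: "a \<in> A \<Longrightarrow> gibbs v a > 0"
  using Zpos[of v] rpos unfolding gibbs_def by (intro divide_pos_pos mult_pos_pos) auto

lemma gibbs_sum: "sum (gibbs v) A = 1"
proof -
  have "Z v \<noteq> 0" using Zpos[of v] by simp
  then show ?thesis by (simp add: gibbs_def sum_divide_distrib[symmetric] Z_def[symmetric])
qed

lemma KL_gibbs: "KL A (gibbs v) r = eta * inner_A A (gibbs v) v - ln (Z v)"
proof -
  have "KL A (gibbs v) r = (\<Sum>a\<in>A. gibbs v a * (eta * v a) - gibbs v a * ln (Z v))"
    unfolding KL_def
  proof (intro sum.cong refl)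
    fix a assume a: "a \<in> A"
    have ra: "r a \<noteq> 0" using rpos a by auto
    have "gibbs v a / r a = exp (eta * v a) / Z v" using ra by (simp add: gibbs_def)
    then have hl: "ln (gibbs v a / r a) = eta * v a - ln (Z v)"
      using Zpos[of v] by (simp add: ln_div)
    show "gibbs v a * ln (gibbs v a / r a) = gibbs v a * (eta * v a) - gibbs v a * ln (Z v)"
      by (simp only: hl right_diff_distrib)
  qed
  also have "\<dots> = eta * inner_A A (gibbs v) v - ln (Z v)"
    by (simp add: sum_subtractf inner_A_def sum_distrib_left sum_distrib_right[symmetric] gibbs_sum algebra_simps)
  finally show ?thesis .
qed

lemma obj_gibbs: "obj A r eta q (gibbs v) = inner_A A (gibbs v) q - inner_A A (gibbs v) v + Phi v"
  using eta by (simp add: obj_def KL_gibbs Phi_def diff_divide_distrib)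

lemma variational:
  assumes p: "p \<in> Defs.simplex A"
  shows "inner_A A p v - KL A p r / eta \<le> Phi v"
proof -
  have p0: "\<forall>a\<in>A. 0 \<le> p a" and p1: "sum p A = 1" using p by (auto simp: simplex_def)
  have tm: "p a * ln (p a / r a) \<ge> p a * (eta * v a) - p a * ln (Z v) + p a - gibbs v a"
    if a: "a \<in> A" for a
  proof (cases "p a = 0")
    case True then show ?thesis using gibbs_pos[OF a, of v] by simp
  next
    case False
    then have pa: "p a > 0" using p0 a by force
    have g: "gibbs v a > 0" using gibbs_pos[OF a] .
    have "ln (gibbs v a / p a) \<le> gibbs v a / p a - 1"
      by (rule ln_le_minus_one) (use g pa in simp)
    then have L1: "p a * ln (gibbs v a / p a) \<le> gibbs v a - p a"
      using pa by (simp add: field_simps mult_left_mono)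
    have ra: "r a > 0" using rpos a by auto
    have L2: "ln (gibbs v a / p a) = ln (r a) + eta * v a - ln (Z v) - ln (p a)"
      using ra pa g Zpos[of v] by (simp add: gibbs_def ln_div ln_mult)
    have L3: "ln (p a / r a) = ln (p a) - ln (r a)"
      using ra pa by (simp add: ln_div)
    have X: "p a * (ln (r a) + eta * v a - ln (Z v) - ln (p a)) \<le> gibbs v a - p a"
      using L1 unfolding L2 .
    show ?thesis unfolding L3 using X by (simp add: algebra_simps)
  qed
  have "(\<Sum>a\<in>A. p a * (eta * v a) - p a * ln (Z v) + p a - gibbs v a) \<le> KL A p r"
    unfolding KL_def by (intro sum_mono tm)
  then have "eta * inner_A A p v - ln (Z v) \<le> KL A p r"
    by (simp add: sum_subtractf sum.distrib inner_A_def sum_distrib_left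
        sum_distrib_right[symmetric] p1 gibbs_sum algebra_simps)
  then have "(eta * inner_A A p v - KL A p r) / eta \<le> ln (Z v) / eta"
    by (intro divide_right_mono) (use eta in auto)
  then show ?thesis using eta by (simp add: Phi_def diff_divide_distrib)
qed

lemma bregman:
  assumes B: "B > 0" and d: "\<forall>a\<in>A. \<bar>d a\<bar> \<le> B"
  shows "Phi (\<lambda>a. v a + d a) - Phi v \<le> inner_A A (gibbs v) d + eta * B^2 / 2"
proof -
  have ZZ: "Z (\<lambda>a. v a + d a) = Z v * (\<Sum>a\<in>A. gibbs v a * exp (eta * d a))"
  proof -
    have nz: "Z v \<noteq> 0" using Zpos[of v] by simp
    have "Z (\<lambda>a. v a + d a) = (\<Sum>a\<in>A. Z v * (gibbs v a * exp (eta * d a)))"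
      unfolding Z_def[of "\<lambda>a. v a + d a"]
      by (intro sum.cong refl) (use nz in \<open>simp add: gibbs_def distrib_left exp_add\<close>)
    then show ?thesis by (simp add: sum_distrib_left)
  qed
  have H: "(\<Sum>a\<in>A. gibbs v a * exp (eta * d a)) \<le>
      exp ((\<Sum>a\<in>A. gibbs v a * (eta * d a)) + (eta * B - (- (eta * B)))^2 / 8)"
  proof -
    have "\<forall>a\<in>A. - (eta * B) \<le> eta * d a \<and> eta * d a \<le> eta * B"
    proof
      fix a assume "a \<in> A"
      then have "- B \<le> d a" "d a \<le> B" using d by (auto simp: abs_le_iff)
      then have "eta * (- B) \<le> eta * d a" "eta * d a \<le> eta * B"
        using eta by (intro mult_left_mono; simp)+
      then show "- (eta * B) \<le> eta * d a \<and> eta * d a \<le> eta * B" by simp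
    qed
    moreover have "\<forall>a\<in>A. 0 \<le> gibbs v a" using gibbs_pos less_imp_le by blast
    moreover have "- (eta * B) < eta * B" using eta B by simp
    ultimately show ?thesis
      using hoeff_fin[OF fin, where w="gibbs v" and x="\<lambda>a. eta * d a" and lo="- (eta * B)" and hi="eta * B"] gibbs_sum[of v]
      by blast
  qed
  have pos: "(\<Sum>a\<in>A. gibbs v a * exp (eta * d a)) > 0"
    using fin Ane gibbs_pos by (intro sum_pos) auto
  have "ln (\<Sum>a\<in>A. gibbs v a * exp (eta * d a)) \<le>
      eta * inner_A A (gibbs v) d + eta^2 * B^2 / 2"
  proof -
    have "ln (\<Sum>a\<in>A. gibbs v a * exp (eta * d a)) \<le>
      (\<Sum>a\<in>A. gibbs v a * (eta * d a)) + (eta * B - (- (eta * B)))^2 / 8"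
      using H pos by (metis exp_gt_zero ln_exp ln_le_cancel_iff)
    also have "\<dots> = eta * inner_A A (gibbs v) d + eta^2 * B^2 / 2"
      by (simp add: inner_A_def sum_distrib_left power2_eq_square algebra_simps)
    finally show ?thesis .
  qed
  then have "ln (Z (\<lambda>a. v a + d a)) - ln (Z v) \<le> eta * inner_A A (gibbs v) d + eta^2 * B^2 / 2"
    using Zpos[of v] pos by (simp add: ZZ ln_mult)
  then show ?thesis using eta
    by (simp add: Phi_def diff_divide_distrib[symmetric] divide_le_eq power2_eq_square algebra_simps)
qed

lemma S_Suc: "S (Suc t) a = S t a + Q (Suc t) a"
  by (simp add: S_def)

lemma tm: "real t * m t a = S t a"
  by (cases "t = 0") (simp_all add: m_def S_def)

lemma key: "real (Suc t) * m (Suc t) a = real t * m t a + Q (Suc t) a"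
  by (simp only: tm S_Suc)

lemma Sb: "a \<in> A \<Longrightarrow> \<bar>S t a\<bar> \<le> real t"
proof (induction t)
  case 0 then show ?case by (simp add: S_def)
next
  case (Suc t)
  have "\<bar>Q (Suc t) a\<bar> \<le> 1" using Qb Suc.prems by auto
  then show ?case using Suc by (simp add: S_Suc)
qed

lemma mb: "a \<in> A \<Longrightarrow> \<bar>m t a\<bar> \<le> 1"
  using Sb[of a t] by (cases "t = 0") (auto simp: m_def abs_div divide_le_eq)

lemma pol_eq: "\<forall>a\<in>A. pol A r eta Q (Suc t) a = gibbs (m t) a"
proof (induction t)
  case 0
  have "Z (m 0) = 1" by (simp add: Z_def m_def rsum)
  then show ?case by (simp add: gibbs_def m_def)
next
  case (Suc t)
  define n where "n = Suc t"
  define W where "W = (\<lambda>a. r a powr (1 / real n)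
       * pol A r eta Q n a powr ((real n - 1) / real n) * exp (eta / real n * Q n a))"
  define c where "c = exp (- (real t / real n) * ln (Z (m t)))"
  have polS: "pol A r eta Q (Suc n) = normalize A W"
    by (simp add: W_def n_def)
  have Wc: "W a = c * (r a * exp (eta * m n a))" if a: "a \<in> A" for a
  proof -
    have ra: "r a > 0" using rpos a by auto
    have g: "gibbs (m t) a > 0" using gibbs_pos[OF a] .
    have pn: "pol A r eta Q n a = gibbs (m t) a" using Suc.IH a by (simp add: n_def)
    have lg: "ln (gibbs (m t) a) = ln (r a) + eta * m t a - ln (Z (m t))"
      using ra Zpos[of "m t"] by (simp add: gibbs_def ln_div ln_mult)
    have nn: "real n = real t + 1" by (simp add: n_def)
    have k: "eta * m n a = (real t * (eta * m t a) + eta * Q n a) / real n"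
      using key[of t a] by (simp add: n_def field_simps)
    have "W a = exp (ln (r a) / real n) * exp ((real t / real n) * (ln (r a) + eta * m t a - ln (Z (m t))))
        * exp (eta / real n * Q n a)"
      using ra g by (simp add: W_def pn powr_def lg nn mult.commute)
    also have "\<dots> = exp (ln (r a) / real n + (real t / real n) * (ln (r a) + eta * m t a - ln (Z (m t)))
        + eta / real n * Q n a)"
      by (simp add: exp_add)
    also have "ln (r a) / real n + (real t / real n) * (ln (r a) + eta * m t a - ln (Z (m t)))
        + eta / real n * Q n a = - (real t / real n) * ln (Z (m t)) + ln (r a) + eta * m n a"
      unfolding k by (rule exp_arith) (simp_all add: nn)
    also have "exp (- (real t / real n) * ln (Z (m t)) + ln (r a) + eta * m n a) = c * (r a * exp (eta * m n a))"
      by (simp only: exp_add exp_ln[OF ra] c_def mult.assoc)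
    finally show ?thesis .
  qed
  have sW: "sum W A = c * Z (m n)"
    unfolding Z_def sum_distrib_left by (intro sum.cong refl) (simp add: Wc)
  have c0: "c \<noteq> 0" by (simp add: c_def)
  show ?case
  proof
    fix a assume a: "a \<in> A"
    show "pol A r eta Q (Suc (Suc t)) a = gibbs (m (Suc t)) a"
      unfolding n_def[symmetric] polS normalize_def sW Wc[OF a]
      using c0 by (simp add: gibbs_def)
  qed
qed

lemma obj_cong: "\<forall>a\<in>A. p a = p' a \<Longrightarrow> obj A r eta q p = obj A r eta q p'"
  unfolding obj_def inner_A_def KL_def by (simp cong: sum.cong)

lemma step:
  "real (Suc t) * Phi (m (Suc t)) - real t * Phi (m t) - 2 * eta / real (Suc t)
     \<le> obj A r eta (Q (Suc t)) (pol A r eta Q (Suc t))"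
proof -
  define n where "n = Suc t"
  define N where "N = real n"
  define g where "g = gibbs (m t)"
  define d where "d = (\<lambda>a. m n a - m t a)"
  have N0: "N > 0" by (simp add: N_def n_def)
  have Nd: "N * d a = Q n a - m t a" for a
    using key[of t a] by (simp add: N_def n_def d_def algebra_simps)
  have db: "\<forall>a\<in>A. \<bar>d a\<bar> \<le> 2 / N"
  proof
    fix a assume a: "a \<in> A"
    have "\<bar>Q n a\<bar> \<le> 1" using Qb a by (simp add: n_def)
    then have "\<bar>N * d a\<bar> \<le> 2" unfolding Nd using mb[OF a, of t] by linarith
    then show "\<bar>d a\<bar> \<le> 2 / N" using N0 by (simp add: abs_mult le_divide_eq mult.commute)
  qed
  have mn: "(\<lambda>a. m t a + d a) = m n" by (simp add: d_def)
  have br: "Phi (m n) - Phi (m t) \<le> inner_A A g d + eta * (2 / N)^2 / 2"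
    using bregman[OF _ db, of "m t"] N0 unfolding mn g_def by simp
  have "N * (Phi (m n) - Phi (m t)) \<le> N * (inner_A A g d + eta * (2 / N)^2 / 2)"
    using br N0 by (simp add: mult_left_mono)
  also have "\<dots> = inner_A A g (\<lambda>a. N * d a) + 2 * eta / N"
    using N0 by (simp add: inner_A_def sum_distrib_left power2_eq_square field_simps)
  also have "inner_A A g (\<lambda>a. N * d a) = inner_A A g (Q n) - inner_A A g (m t)"
    unfolding Nd by (simp add: inner_A_def sum_subtractf right_diff_distrib)
  finally have X: "N * Phi (m n) - N * Phi (m t) \<le> inner_A A g (Q n) - inner_A A g (m t) + 2 * eta / N"
    by (simp add: right_diff_distrib)
  have ob: "obj A r eta (Q n) (pol A r eta Q n) = inner_A A g (Q n) - inner_A A g (m t) + Phi (m t)"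
  proof -
    have "obj A r eta (Q n) (pol A r eta Q n) = obj A r eta (Q n) g"
      unfolding n_def g_def by (rule obj_cong[OF pol_eq])
    then show ?thesis by (simp add: g_def obj_gibbs)
  qed
  have "N = real t + 1" by (simp add: N_def n_def)
  then show ?thesis using X ob unfolding N_def n_def by (simp add: algebra_simps)
qed

lemma sum_lower:
  "real T * Phi (m T) - 2 * eta * (\<Sum>t=1..T. 1 / real t) \<le> (\<Sum>t=1..T. obj A r eta (Q t) (pol A r eta Q t))"
proof (induction T)
  case 0 then show ?case by simp
next
  case (Suc T)
  have "real (Suc T) * Phi (m (Suc T)) - 2 * eta * (\<Sum>t=1..Suc T. 1 / real t)
      = (real T * Phi (m T) - 2 * eta * (\<Sum>t=1..T. 1 / real t))
        + (real (Suc T) * Phi (m (Suc T)) - real T * Phi (m T) - 2 * eta / real (Suc T))"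
    by (simp add: algebra_simps)
  also have "\<dots> \<le> (\<Sum>t=1..T. obj A r eta (Q t) (pol A r eta Q t)) + obj A r eta (Q (Suc T)) (pol A r eta Q (Suc T))"
    using Suc.IH step[of T] by linarith
  finally show ?case by simp
qed

lemma upper:
  assumes p: "p \<in> Defs.simplex A" and T: "1 \<le> T"
  shows "(\<Sum>t=1..T. obj A r eta (Q t) p) \<le> real T * Phi (m T)"
proof -
  have "(\<Sum>t=1..T. obj A r eta (Q t) p) = (\<Sum>t=1..T. inner_A A p (Q t)) - real T * (KL A p r / eta)"
    by (simp add: obj_def sum_subtractf)
  also have "(\<Sum>t=1..T. inner_A A p (Q t)) = inner_A A p (S T)"
    unfolding inner_A_def S_def by (simp add: sum_distrib_left sum.swap[of _ A])
  also have "inner_A A p (S T) = real T * inner_A A p (m T)"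
    unfolding inner_A_def sum_distrib_left by (intro sum.cong refl) (simp add: tm[symmetric])
  finally have "(\<Sum>t=1..T. obj A r eta (Q t) p) = real T * (inner_A A p (m T) - KL A p r / eta)"
    by (simp add: algebra_simps)
  also have "\<dots> \<le> real T * Phi (m T)"
    using variational[OF p, of "m T"] by (simp add: mult_left_mono)
  finally show ?thesis .
qed

end

theorem mainTheorem8:
  "\<exists>C::real. \<forall>(A::'a set) (piref::'a \<Rightarrow> real) (eta::real) (Q::nat \<Rightarrow> 'a \<Rightarrow> real) (T::nat).
     finite A \<longrightarrow> piref \<in> simplex A \<longrightarrow> (\<forall>a\<in>A. 0 < piref a) \<longrightarrow> 0 < eta \<longrightarrow>
     (\<forall>t\<ge>1. \<forall>a\<in>A. \<bar>Q t a\<bar> \<le> 1) \<longrightarrow> 1 \<le> T \<longrightarrow>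
     (\<forall>p\<in>simplex A.
        (\<Sum>t=1..T. obj A piref eta (Q t) p) / real T
        - (\<Sum>t=1..T. obj A piref eta (Q t) (pol A piref eta Q t)) / real T
        \<le> C * (eta * (1 + ln (real T)) / real T))"
proof (intro exI[of _ 2] allI impI ballI)
  fix A :: "'a set" and piref :: "'a \<Rightarrow> real" and eta :: real and Q :: "nat \<Rightarrow> 'a \<Rightarrow> real"
    and T :: nat and p :: "'a \<Rightarrow> real"
  assume h: "finite A" "piref \<in> simplex A" "\<forall>a\<in>A. 0 < piref a" "0 < eta"
    "\<forall>t\<ge>1. \<forall>a\<in>A. \<bar>Q t a\<bar> \<le> 1" "1 \<le> T" and p: "p \<in> simplex A"
  interpret rg A piref eta Q using h by unfold_locales auto
  have U: "(\<Sum>t=1..T. obj A piref eta (Q t) p) \<le> real T * Phi (m T)"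
    using upper[OF p h(6)] .
  have L: "real T * Phi (m T) - 2 * eta * (\<Sum>t=1..T. 1 / real t)
      \<le> (\<Sum>t=1..T. obj A piref eta (Q t) (pol A piref eta Q t))"
    using sum_lower .
  have H: "2 * eta * (\<Sum>t=1..T. 1 / real t) \<le> 2 * eta * (1 + ln (real T))"
    using harm_bound[OF h(6)] h(4) by simp
  have D: "(\<Sum>t=1..T. obj A piref eta (Q t) p) - (\<Sum>t=1..T. obj A piref eta (Q t) (pol A piref eta Q t))
      \<le> 2 * (eta * (1 + ln (real T)))"
    using U L H by linarith
  have T0: "real T > 0" using h(6) by simp
  show "(\<Sum>t=1..T. obj A piref eta (Q t) p) / real T
        - (\<Sum>t=1..T. obj A piref eta (Q t) (pol A piref eta Q t)) / real T
        \<le> 2 * (eta * (1 + ln (real T)) / real T)"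
    using divide_right_mono[OF D, of "real T"] T0 by (simp add: diff_divide_distrib)
qed

end
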